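(* Under assumptions (A1)–(A6), for (almost) every $x$, $$P(Y(0)=0\mid Y=1,M=1,A=1,X=x)=\delta(x),$$ $$P(Y(1,M(0))=0,\,Y(0,M(0))=0\mid Y=1,M=1,A=1,X=x)=\psi(x),$$ $$P(Y(1,M(0))=1,\,Y(0,M(0))=0\mid Y=1,M=1,A=1,X=x)=\zeta(x).$$
   Context: Observed data $O=(X,A,M,Y)$ with covariates $X\in\mathbb{R}^d$, binary exposure $A$, binary mediator $M$, binary outcome $Y$. For $a,m\in\{0,1\}$, $Y(a,m)$ is the potential outcome under $A=a,M=m$, $M(a)$ the potential mediator, $Y(a):=Y(a,M(a))$, cross-world $Y(a,M(a'))$ by substitution, all on a common probability space with $O$. $\delta(x)=P(Y(0)=0\mid Y(1)=1,M(1)=1,X=x)$; $\psi(x)=P(Y(1,M(0))=0,\,Y(0,M(0))=0\mid Y(1,M(1))=1,M(1)=1,X=x)$; $\zeta(x)=P(Y(1,M(0))=1,\,Y(0,M(0))=0\mid Y(1,M(1))=1,M(1)=1,X=x)$. Assumptions: (A1) $A=a,M=m\Rightarrow Y=Y(a,m)$ and $A=a\Rightarrow M=M(a)$. (A2) $Y(1,1)\ge Y(1,0)\ge Y(0,0)$, $Y(1,1)\ge Y(0,1)$, $M(1)\ge M(0)$. (A3) $A\perp\{Y(1,1),Y(1,0),Y(0,1),Y(0,0),M(1),M(0)\}\mid X$. (A4) $\{Y(1,1),Y(1,0),Y(0,1),Y(0,0)\}\perp\{M(1),M(0)\}\mid X$. (A5) for some $\epsilon>0$, $P\{\min_{a,m}P(A=a,M=m\mid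 X)\ge\epsilon\}=1$. (A6) $P\{P(Y=1\mid A=1,M=1,X)\ge\epsilon\}=1$. *)

theory Defs
  imports "HOL-Probability.Probability"
begin

definition sigmaX :: "'a measure \<Rightarrow> ('a \<Rightarrow> real^'d) \<Rightarrow> 'a measure" where
  "sigmaX M X = vimage_algebra (space M) X borel"

definition cprob :: "'a measure \<Rightarrow> ('a \<Rightarrow> real^'d) \<Rightarrow> 'a set \<Rightarrow> 'a \<Rightarrow> real" where
  "cprob M X E = real_cond_exp M (sigmaX M X) (indicator E)"

definition cprob_ev :: "'a measure \<Rightarrow> ('a \<Rightarrow> real^'d) \<Rightarrow> 'a set \<Rightarrow> 'a set \<Rightarrow> 'a \<Rightarrow> real" where
  "cprob_ev M X E B = (\<lambda>\<omega>. cprob M X (E \<inter> B) \<omega> / cprob M X B \<omega>)"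

definition ev :: "'a measure \<Rightarrow> ('a \<Rightarrow> bool) \<Rightarrow> 'a set" where
  "ev M P = {\<omega> \<in> space M. P \<omega>}"

text \<open>Conditional independence given X of two discrete (countably-valued) random variables U, V:
  P(U=u, V=v | X) = P(U=u | X) P(V=v | X) almost surely, for all values u, v.\<close>
definition cond_indep :: "'a measure \<Rightarrow> ('a \<Rightarrow> real^'d) \<Rightarrow> ('a \<Rightarrow> 'u) \<Rightarrow> ('a \<Rightarrow> 'v) \<Rightarrow> bool" where
  "cond_indep M X U V \<longleftrightarrow> (\<forall>u v. AE \<omega> in M.
      cprob M X (ev M (\<lambda>w. U w = u \<and> V w = v)) \<omega>
        = cprob M X (ev M (\<lambda>w. U w = u)) \<omega> * cprob M X (ev M (\<lambda>w. V w = v)) \<omega>)"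

end

theory Submission
  imports Defs
begin
lemma setc: "f \<in> measurable M (count_space UNIV) \<Longrightarrow> {w \<in> space M. f w = (c::'b)} \<in> sets M"
proof -
  assume f: "f \<in> measurable M (count_space UNIV)"
  have "f -` {c} \<inter> space M \<in> sets M" using measurable_sets[OF f] by simp
  moreover have "f -` {c} \<inter> space M = {w \<in> space M. f w = c}" by auto
  ultimately show ?thesis by simp
qed
lemma sfs:
  fixes M :: "'a measure" and X :: "'a \<Rightarrow> real^'d"
  assumes "prob_space M" "X \<in> borel_measurable M"
  shows "sigma_finite_subalgebra M (sigmaX M X)"
proof -
  interpret prob_space M by fact
  have sub: "subalgebra M (sigmaX M X)"
    unfolding subalgebra_def sigmaX_def
    using assms(2) by (auto simp: sets_vimage_algebra2 measurable_sets)
  show ?thesis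
    by (rule finite_measure_subalgebra_is_sigma_finite)
      (simp add: finite_measure_subalgebra_def finite_measure_subalgebra_axioms_def sub finite_measure_axioms)
qed

lemma indep_finite:
  fixes M :: "'a measure" and X :: "'a \<Rightarrow> real^'d" and A :: "'a \<Rightarrow> nat" and V :: "'a \<Rightarrow> 'v"
  assumes "prob_space M" "X \<in> borel_measurable M"
    and ci: "cond_indep M X A V" and fin: "finite S"
    and meas: "\<And>v. ev M (\<lambda>w. A w = 1 \<and> V w = v) \<in> sets M"
  shows "AE \<omega> in M. cprob M X (ev M (\<lambda>w. A w = 1 \<and> V w \<in> S)) \<omega>
      = cprob M X (ev M (\<lambda>w. A w = 1)) \<omega> * (\<Sum>v\<in>S. cprob M X (ev M (\<lambda>w. V w = v)) \<omega>)"
proof -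
  interpret prob_space M by fact
  interpret sigma_finite_subalgebra M "sigmaX M X" using sfs assms by blast
  have ind: "indicator (ev M (\<lambda>w. A w = 1 \<and> V w \<in> S))
      = (\<lambda>\<omega>. \<Sum>v\<in>S. indicator (ev M (\<lambda>w. A w = 1 \<and> V w = v)) \<omega> :: real)"
  proof
    fix \<omega>
    show "indicator (ev M (\<lambda>w. A w = 1 \<and> V w \<in> S)) \<omega>
      = (\<Sum>v\<in>S. indicator (ev M (\<lambda>w. A w = 1 \<and> V w = v)) \<omega> :: real)"
    proof (cases "\<omega> \<in> space M \<and> A \<omega> = 1")
      case True
      then show ?thesis using fin by (simp add: indicator_def ev_def sum.delta)
    next
      case False
      then show ?thesis by (auto simp: indicator_def ev_def)
    qed
  qed
  have int: "\<And>v. integrable M (indicator (ev M (\<lambda>w. A w = 1 \<and> V w = v)) :: 'a \<Rightarrow> real)"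
    using meas by (auto intro!: integrable_real_indicator simp: less_top[symmetric])
  have s: "AE \<omega> in M. cprob M X (ev M (\<lambda>w. A w = 1 \<and> V w \<in> S)) \<omega>
       = (\<Sum>v\<in>S. cprob M X (ev M (\<lambda>w. A w = 1 \<and> V w = v)) \<omega>)"
    unfolding cprob_def ind using real_cond_exp_sum[OF int] by simp
  have f: "AE \<omega> in M. \<forall>v\<in>S. cprob M X (ev M (\<lambda>w. A w = 1 \<and> V w = v)) \<omega>
        = cprob M X (ev M (\<lambda>w. A w = 1)) \<omega> * cprob M X (ev M (\<lambda>w. V w = v)) \<omega>"
    using ci fin unfolding cond_indep_def by (auto simp: AE_finite_all)
  show ?thesis using s f by eventually_elim (simp add: sum_distrib_left)
qed

lemma sum_finite:
  fixes M :: "'a measure" and X :: "'a \<Rightarrow> real^'d" and V :: "'a \<Rightarrow> 'v"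
  assumes "prob_space M" "X \<in> borel_measurable M"
    and fin: "finite S"
    and meas: "\<And>v. ev M (\<lambda>w. V w = v) \<in> sets M"
  shows "AE \<omega> in M. cprob M X (ev M (\<lambda>w. V w \<in> S)) \<omega>
      = (\<Sum>v\<in>S. cprob M X (ev M (\<lambda>w. V w = v)) \<omega>)"
proof -
  interpret prob_space M by fact
  interpret sigma_finite_subalgebra M "sigmaX M X" using sfs assms by blast
  have ind: "indicator (ev M (\<lambda>w. V w \<in> S))
      = (\<lambda>\<omega>. \<Sum>v\<in>S. indicator (ev M (\<lambda>w. V w = v)) \<omega> :: real)"
  proof
    fix \<omega>
    show "indicator (ev M (\<lambda>w. V w \<in> S)) \<omega>
      = (\<Sum>v\<in>S. indicator (ev M (\<lambda>w. V w = v)) \<omega> :: real)"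
    proof (cases "\<omega> \<in> space M")
      case True
      then show ?thesis using fin by (simp add: indicator_def ev_def sum.delta)
    next
      case False
      then show ?thesis by (auto simp: indicator_def ev_def)
    qed
  qed
  have int: "\<And>v. integrable M (indicator (ev M (\<lambda>w. V w = v)) :: 'a \<Rightarrow> real)"
    using meas by (auto intro!: integrable_real_indicator simp: less_top[symmetric])
  show ?thesis
    unfolding cprob_def ind
    by (rule real_cond_exp_sum[where f="\<lambda>v. indicator (ev M (\<lambda>w. V w = v))", OF int])
qed

lemma final:
  fixes M :: "'a measure" and X :: "'a \<Rightarrow> real^'d" and A :: "'a \<Rightarrow> nat" and V :: "'a \<Rightarrow> 'v"
  assumes "prob_space M" "X \<in> borel_measurable M"
    and ci: "cond_indep M X A V" and fin: "finite S1" "finite S2"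
    and meas: "\<And>v. ev M (\<lambda>w. A w = 1 \<and> V w = v) \<in> sets M" "\<And>v. ev M (\<lambda>w. V w = v) \<in> sets M"
    and pos: "AE \<omega> in M. cprob M X (ev M (\<lambda>w. A w = 1)) \<omega> > 0"
  shows "AE \<omega> in M. cprob M X (ev M (\<lambda>w. A w = 1 \<and> V w \<in> S1)) \<omega> / cprob M X (ev M (\<lambda>w. A w = 1 \<and> V w \<in> S2)) \<omega>
     = cprob M X (ev M (\<lambda>w. V w \<in> S1)) \<omega> / cprob M X (ev M (\<lambda>w. V w \<in> S2)) \<omega>"
  using indep_finite[OF assms(1,2) ci fin(1) meas(1)] indep_finite[OF assms(1,2) ci fin(2) meas(1)]
    sum_finite[OF assms(1,2) fin(1) meas(2)] sum_finite[OF assms(1,2) fin(2) meas(2)] pos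
  by eventually_elim simp

theorem mainTheorem5:
  fixes M :: "'a measure"
    and X :: "'a \<Rightarrow> real^'d"
    and A Med Y :: "'a \<Rightarrow> nat"
    and Ypot :: "nat \<Rightarrow> nat \<Rightarrow> 'a \<Rightarrow> nat"  \<comment> \<open>Ypot a m = Y(a,m)\<close>
    and Mpot :: "nat \<Rightarrow> 'a \<Rightarrow> nat"          \<comment> \<open>Mpot a = M(a)\<close>
  assumes prob: "prob_space M"
    and X_meas: "X \<in> borel_measurable M"
    and A_meas: "A \<in> measurable M (count_space UNIV)"
    and Med_meas: "Med \<in> measurable M (count_space UNIV)"
    and Y_meas: "Y \<in> measurable M (count_space UNIV)"
    and Ypot_meas: "\<And>a m. Ypot a m \<in> measurable M (count_space UNIV)"
    and Mpot_meas: "\<And>a. Mpot a \<in> measurable M (count_space UNIV)"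
    and binary: "\<And>\<omega>. \<omega> \<in> space M \<Longrightarrow> A \<omega> \<in> {0,1} \<and> Med \<omega> \<in> {0,1} \<and> Y \<omega> \<in> {0,1}"
    and binary_pot: "\<And>\<omega> a m. \<omega> \<in> space M \<Longrightarrow> a \<in> {0,1} \<Longrightarrow> m \<in> {0,1} \<Longrightarrow>
                        Ypot a m \<omega> \<in> {0,1} \<and> Mpot a \<omega> \<in> {0,1}"
    \<comment> \<open>(A1) consistency\<close>
    and A1_Y: "\<And>\<omega> a m. \<omega> \<in> space M \<Longrightarrow> a \<in> {0,1} \<Longrightarrow> m \<in> {0,1} \<Longrightarrow>
                  A \<omega> = a \<Longrightarrow> Med \<omega> = m \<Longrightarrow> Y \<omega> = Ypot a m \<omega>"
    and A1_M: "\<And>\<omega> a. \<omega> \<in> space M \<Longrightarrow> a \<in> {0,1} \<Longrightarrow> A \<omega> = a \<Longrightarrow> Med \<omega> = Mpot a \<omega>"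
    \<comment> \<open>(A2) monotonicity\<close>
    and A2: "\<And>\<omega>. \<omega> \<in> space M \<Longrightarrow>
                Ypot 1 1 \<omega> \<ge> Ypot 1 0 \<omega> \<and> Ypot 1 0 \<omega> \<ge> Ypot 0 0 \<omega> \<and>
                Ypot 1 1 \<omega> \<ge> Ypot 0 1 \<omega> \<and> Mpot 1 \<omega> \<ge> Mpot 0 \<omega>"
    \<comment> \<open>(A3) exposure ignorability\<close>
    and A3: "cond_indep M X A
               (\<lambda>\<omega>. (Ypot 1 1 \<omega>, Ypot 1 0 \<omega>, Ypot 0 1 \<omega>, Ypot 0 0 \<omega>, Mpot 1 \<omega>, Mpot 0 \<omega>))"
    \<comment> \<open>(A4) cross-world independence of outcomes and mediators\<close>
    and A4: "cond_indep M X
               (\<lambda>\<omega>. (Ypot 1 1 \<omega>, Ypot 1 0 \<omega>, Ypot 0 1 \<omega>, Ypot 0 0 \<omega>))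
               (\<lambda>\<omega>. (Mpot 1 \<omega>, Mpot 0 \<omega>))"
    \<comment> \<open>(A5), (A6) positivity\<close>
    and eps_pos: "(\<epsilon>::real) > 0"
    and A5: "AE \<omega> in M. \<forall>a\<in>{0,1}. \<forall>m\<in>{0,1}.
               cprob M X (ev M (\<lambda>w. A w = a \<and> Med w = m)) \<omega> \<ge> \<epsilon>"
    and A6: "AE \<omega> in M.
               cprob_ev M X (ev M (\<lambda>w. Y w = 1)) (ev M (\<lambda>w. A w = 1 \<and> Med w = 1)) \<omega> \<ge> \<epsilon>"
  shows
    "(AE \<omega> in M.
       cprob_ev M X (ev M (\<lambda>w. Ypot 0 (Mpot 0 w) w = 0))
                    (ev M (\<lambda>w. Y w = 1 \<and> Med w = 1 \<and> A w = 1)) \<omega>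
     = cprob_ev M X (ev M (\<lambda>w. Ypot 0 (Mpot 0 w) w = 0))
                    (ev M (\<lambda>w. Ypot 1 (Mpot 1 w) w = 1 \<and> Mpot 1 w = 1)) \<omega>)
   \<and> (AE \<omega> in M.
       cprob_ev M X (ev M (\<lambda>w. Ypot 1 (Mpot 0 w) w = 0 \<and> Ypot 0 (Mpot 0 w) w = 0))
                    (ev M (\<lambda>w. Y w = 1 \<and> Med w = 1 \<and> A w = 1)) \<omega>
     = cprob_ev M X (ev M (\<lambda>w. Ypot 1 (Mpot 0 w) w = 0 \<and> Ypot 0 (Mpot 0 w) w = 0))
                    (ev M (\<lambda>w. Ypot 1 (Mpot 1 w) w = 1 \<and> Mpot 1 w = 1)) \<omega>)
   \<and> (AE \<omega> in M.
       cprob_ev M X (ev M (\<lambda>w. Ypot 1 (Mpot 0 w) w = 1 \<and> Ypot 0 (Mpot 0 w) w = 0))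
                    (ev M (\<lambda>w. Y w = 1 \<and> Med w = 1 \<and> A w = 1)) \<omega>
     = cprob_ev M X (ev M (\<lambda>w. Ypot 1 (Mpot 0 w) w = 1 \<and> Ypot 0 (Mpot 0 w) w = 0))
                    (ev M (\<lambda>w. Ypot 1 (Mpot 1 w) w = 1 \<and> Mpot 1 w = 1)) \<omega>)"
  proof -
  interpret prob_space M by (rule prob)
  interpret sigma_finite_subalgebra M "sigmaX M X" using sfs prob X_meas by blast
  define V where "V = (\<lambda>\<omega>. (Ypot 1 1 \<omega>, Ypot 1 0 \<omega>, Ypot 0 1 \<omega>, Ypot 0 0 \<omega>, Mpot 1 \<omega>, Mpot 0 \<omega>))"
  have ci: "cond_indep M X A V" using A3 unfolding V_def .
  define B :: "nat set" where "B = {0,1}"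
  define T where "T = B \<times> B \<times> B \<times> B \<times> B \<times> B"
  have finT: "finite T" unfolding T_def B_def by simp
  have VT: "V w \<in> T" if "w \<in> space M" for w
  proof -
    have h: "Ypot a m w \<in> B \<and> Mpot a w \<in> B" if "a \<in> {0,1}" "m \<in> {0,1}" for a m
      using binary_pot[OF \<open>w \<in> space M\<close> that] unfolding B_def by blast
    show ?thesis unfolding V_def T_def
      using h[of 1 1] h[of 0 0] h[of 1 0] h[of 0 1] by (simp add: mem_Times_iff)
  qed
  have measAV: "ev M (\<lambda>w. A w = 1 \<and> V w = v) \<in> sets M" for v
  proof -
    obtain a b c d e f where v: "v = (a,b,c,d,e,f)" by (cases v) auto
    show ?thesis unfolding v V_def ev_def prod.inject
      by (intro sets.sets_Collect_conj setc A_meas Ypot_meas Mpot_meas)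
  qed
  have measV: "ev M (\<lambda>w. V w = v) \<in> sets M" for v
  proof -
    obtain a b c d e f where v: "v = (a,b,c,d,e,f)" by (cases v) auto
    show ?thesis unfolding v V_def ev_def prod.inject
      by (intro sets.sets_Collect_conj setc A_meas Ypot_meas Mpot_meas)
  qed
  have int: "integrable M (indicator (ev M P) :: 'a \<Rightarrow> real)" if "ev M P \<in> sets M" for P
    using that by (auto intro!: integrable_real_indicator simp: less_top[symmetric])
  have mA: "ev M (\<lambda>w. A w = 1) \<in> sets M" unfolding ev_def by (intro setc A_meas)
  have mAM: "ev M (\<lambda>w. A w = 1 \<and> Med w = 1) \<in> sets M" unfolding ev_def
    by (intro sets.sets_Collect_conj setc A_meas Med_meas)
  have mono: "AE \<omega> in M. cprob M X (ev M (\<lambda>w. A w = 1 \<and> Med w = 1)) \<omega> \<le> cprob M X (ev M (\<lambda>w. A w = 1)) \<omega>"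
    unfolding cprob_def
    by (rule real_cond_exp_mono[OF _ int[OF mAM] int[OF mA]]) (auto simp: indicator_def ev_def)
  have pos: "AE \<omega> in M. cprob M X (ev M (\<lambda>w. A w = 1)) \<omega> > 0"
    using mono A5 by eventually_elim (use eps_pos in force)
  define QB where "QB = (\<lambda>(y11::nat,y10::nat,y01::nat,y00::nat,m1::nat,m0::nat). y11 = 1 \<and> m1 = 1)"
  have QBV: "QB (V w) = (Ypot 1 (Mpot 1 w) w = 1 \<and> Mpot 1 w = 1)" if "w \<in> space M" for w
    unfolding QB_def V_def by auto
  have cons: "Y w = 1 \<and> Med w = 1 \<and> A w = 1 \<longleftrightarrow> A w = 1 \<and> Ypot 1 (Mpot 1 w) w = 1 \<and> Mpot 1 w = 1"
    if "w \<in> space M" for w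
    using A1_Y[OF that, of 1 1] A1_M[OF that, of 1] by auto
  have B1eq: "ev M (\<lambda>w. Y w = 1 \<and> Med w = 1 \<and> A w = 1) = ev M (\<lambda>w. A w = 1 \<and> V w \<in> {v\<in>T. QB v})"
    unfolding ev_def using VT QBV cons by auto
  have B2eq: "ev M (\<lambda>w. Ypot 1 (Mpot 1 w) w = 1 \<and> Mpot 1 w = 1) = ev M (\<lambda>w. V w \<in> {v\<in>T. QB v})"
    unfolding ev_def using VT QBV by auto
  have gen: "AE \<omega> in M. cprob_ev M X (ev M P) (ev M (\<lambda>w. Y w = 1 \<and> Med w = 1 \<and> A w = 1)) \<omega>
      = cprob_ev M X (ev M P) (ev M (\<lambda>w. Ypot 1 (Mpot 1 w) w = 1 \<and> Mpot 1 w = 1)) \<omega>"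
    if PQ: "\<And>w. w \<in> space M \<Longrightarrow> P w = QE (V w)" for P QE
  proof -
    have e1: "ev M P \<inter> ev M (\<lambda>w. Y w = 1 \<and> Med w = 1 \<and> A w = 1)
        = ev M (\<lambda>w. A w = 1 \<and> V w \<in> {v\<in>T. QE v \<and> QB v})"
      unfolding ev_def using VT QBV cons PQ by auto
    have e2: "ev M P \<inter> ev M (\<lambda>w. Ypot 1 (Mpot 1 w) w = 1 \<and> Mpot 1 w = 1)
        = ev M (\<lambda>w. V w \<in> {v\<in>T. QE v \<and> QB v})"
      unfolding ev_def using VT QBV PQ by auto
    show ?thesis unfolding cprob_ev_def e1 e2 unfolding B1eq B2eq
      by (rule final[OF prob X_meas ci _ _ measAV measV pos]) (use finT in auto)
  qed
  have bin0: "Mpot 0 w = 0 \<or> Mpot 0 w = 1" if "w \<in> space M" for w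
    using binary_pot[OF that, of 0 0] by auto
  show ?thesis
  proof (intro conjI)
    show "AE \<omega> in M.
       cprob_ev M X (ev M (\<lambda>w. Ypot 0 (Mpot 0 w) w = 0))
                    (ev M (\<lambda>w. Y w = 1 \<and> Med w = 1 \<and> A w = 1)) \<omega>
     = cprob_ev M X (ev M (\<lambda>w. Ypot 0 (Mpot 0 w) w = 0))
                    (ev M (\<lambda>w. Ypot 1 (Mpot 1 w) w = 1 \<and> Mpot 1 w = 1)) \<omega>"
      by (rule gen[of _ "\<lambda>(y11,y10,y01,y00,m1,m0). (if m0 = 0 then y00 else y01) = 0"])
        (use bin0 in \<open>fastforce simp: V_def\<close>)
    show "AE \<omega> in M.
       cprob_ev M X (ev M (\<lambda>w. Ypot 1 (Mpot 0 w) w = 0 \<and> Ypot 0 (Mpot 0 w) w = 0))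
                    (ev M (\<lambda>w. Y w = 1 \<and> Med w = 1 \<and> A w = 1)) \<omega>
     = cprob_ev M X (ev M (\<lambda>w. Ypot 1 (Mpot 0 w) w = 0 \<and> Ypot 0 (Mpot 0 w) w = 0))
                    (ev M (\<lambda>w. Ypot 1 (Mpot 1 w) w = 1 \<and> Mpot 1 w = 1)) \<omega>"
      by (rule gen[of _ "\<lambda>(y11,y10,y01,y00,m1,m0). (if m0 = 0 then y10 else y11) = 0 \<and> (if m0 = 0 then y00 else y01) = 0"])
        (use bin0 in \<open>fastforce simp: V_def\<close>)
    show "AE \<omega> in M.
       cprob_ev M X (ev M (\<lambda>w. Ypot 1 (Mpot 0 w) w = 1 \<and> Ypot 0 (Mpot 0 w) w = 0))
                    (ev M (\<lambda>w. Y w = 1 \<and> Med w = 1 \<and> A w = 1)) \<omega>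
     = cprob_ev M X (ev M (\<lambda>w. Ypot 1 (Mpot 0 w) w = 1 \<and> Ypot 0 (Mpot 0 w) w = 0))
                    (ev M (\<lambda>w. Ypot 1 (Mpot 1 w) w = 1 \<and> Mpot 1 w = 1)) \<omega>"
      by (rule gen[of _ "\<lambda>(y11,y10,y01,y00,m1,m0). (if m0 = 0 then y10 else y11) = 1 \<and> (if m0 = 0 then y00 else y01) = 0"])
        (use bin0 in \<open>fastforce simp: V_def\<close>)
  qed
qed

end
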